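(* Let $\eta>0$ and $\beta\in(1,2]$, and let $\lambda(n)=1-\exp\left[-\left(\frac{n}{\eta}\right)^\beta+\left(\frac{n-1}{\eta}\right)^\beta\right]$ for integers $n\geq 1$ be the hazard function of the Weibull-1 distribution $\mathrm{W}_1(\eta,\beta)$. Then $\lambda$ is a concave function of $n$, i.e. its second-order discrete derivative satisfies $\lambda(n)-2\lambda(n-1)+\lambda(n-2)\leq 0$ for every integer $n\geq 3$.
   Context: The Weibull-1 (Type I discrete Weibull) distribution $\mathrm{W}_1(\eta,\beta)$, with $\eta>0,\beta>0$, is the distribution of a random variable $N$ with values in $\{1,2,\dots\}$ and survival function $S(n)=\mathbb{P}[N>n]=\exp[-(n/\eta)^\beta]$ for integers $n\ge 0$. Its hazard function is $\lambda(n)=\mathbb{P}[N=n\mid N>n-1]$, which equals the formula given in the claim. For a function $\lambda$ on the integers, its second-order discrete derivative at $n$ is $\lambda''(n)=\lambda(n)-2\lambda(n-1)+\lambda(n-2)$, and concavity means this is nonpositive. *)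

theory Defs
  imports Complex_Main
begin

definition weibull1_hazard :: "real \<Rightarrow> real \<Rightarrow> nat \<Rightarrow> real" where
  "weibull1_hazard \<eta> \<beta> n =
     1 - exp (- ((real n / \<eta>) powr \<beta>) + ((real n - 1) / \<eta>) powr \<beta>)"

end

theory Submission imports Defs "HOL-Analysis.Analysis" begin
lemma conc:
  fixes g t :: real
  assumes "0 < g" "g \<le> 1" "1 < t"
  shows "(t+1) powr g + (t-1) powr g \<le> 2 * t powr g"
proof -
  have cv: "convex_on {0<..} (\<lambda>x::real. - (x powr g))"
  proof (rule convex_on_realI[where f'="\<lambda>x. - (g * x powr (g - 1))"])
    show "connected {0::real<..}" by simp
    fix x :: real assume "x \<in> {0<..}"
    then show "((\<lambda>x. - (x powr g)) has_real_derivative - (g * x powr (g - 1))) (at x)"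
      by (auto intro!: derivative_eq_intros)
  next
    fix x y :: real assume "x \<in> {0<..}" "y \<in> {0<..}" "x \<le> y"
    then have "y powr (g-1) \<le> x powr (g-1)" using assms by (intro powr_mono2') auto
    then show "- (g * x powr (g - 1)) \<le> - (g * y powr (g - 1))" using assms by simp
  qed
  have "- (((1 - 1/2) * (t-1) + (1/2) * (t+1)) powr g) \<le> (1 - 1/2) * (- ((t-1) powr g)) + (1/2) * (- ((t+1) powr g))"
    using convex_onD[OF cv, of "1/2" "t-1" "t+1"] assms by simp
  moreover have "(1 - 1/2) * (t-1) + (1/2) * (t+1) = t" by (simp add: field_simps)
  ultimately show ?thesis by simp
qed

lemma Dmono:
  fixes b m :: real
  assumes "1 < b" "b \<le> 2" "1 \<le> m"
  shows "(m+2) powr b - 2*(m+1) powr b + m powr b \<le> (m+1) powr b - 2*m powr b + (m-1) powr b"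
proof -
  define D where "D = (\<lambda>x::real. (x+1) powr b - 2*x powr b + (x-1) powr b)"
  have "D (m+1) \<le> D m"
  proof (rule DERIV_nonpos_imp_decreasing_open[of m "m+1" D])
    show "m \<le> m+1" by simp
    fix x assume x: "m < x" "x < m+1"
    have "DERIV D x :> b * (x+1) powr (b-1) - 2 * (b * x powr (b-1)) + b * (x-1) powr (b-1)"
      unfolding D_def using x assms
      by (auto intro!: derivative_eq_intros simp: field_simps)
    moreover have "b * (x+1) powr (b-1) - 2 * (b * x powr (b-1)) + b * (x-1) powr (b-1) \<le> 0"
    proof -
      have "(x+1) powr (b-1) + (x-1) powr (b-1) \<le> 2 * x powr (b-1)"
        using conc[of "b-1" x] assms x by simp
      then have "b * ((x+1) powr (b-1) + (x-1) powr (b-1)) \<le> b * (2 * x powr (b-1))"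
        using assms by (intro mult_left_mono) auto
      then show ?thesis by (simp add: algebra_simps)
    qed
    ultimately show "\<exists>y. DERIV D x :> y \<and> y \<le> 0" by blast
  next
    show "continuous_on {m..m+1} D"
      unfolding continuous_on_def D_def
    proof
      fix x assume x: "x \<in> {m..m+1}"
      have ev: "\<forall>\<^sub>F y in at x within {m..m+1}. 0 \<le> y - 1"
        unfolding eventually_at_filter using assms by (auto intro!: always_eventually)
      have ev2: "\<forall>\<^sub>F y in at x within {m..m+1}. 0 \<le> y"
        unfolding eventually_at_filter using assms by (auto intro!: always_eventually)
      have ev3: "\<forall>\<^sub>F y in at x within {m..m+1}. 0 \<le> y + 1"
        unfolding eventually_at_filter using assms by (auto intro!: always_eventually)
      show "((\<lambda>x. (x + 1) powr b - 2 * x powr b + (x - 1) powr b) \<longlongrightarrow>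
          (x + 1) powr b - 2 * x powr b + (x - 1) powr b) (at x within {m..m + 1})"
        using assms ev ev2 ev3 by (intro tendsto_intros) auto
    qed
  qed
  then show ?thesis unfolding D_def by (simp add: algebra_simps)
qed

lemma expineq:
  fixes a b c :: real
  assumes "a + c \<le> 2 * b"
  shows "2 * exp (- b) \<le> exp (- a) + exp (- c)"
proof -
  have "2 * exp (- b) \<le> 2 * exp (- (a + c) / 2)" using assms by simp
  also have "exp (- (a + c) / 2) = exp (- a / 2) * exp (- c / 2)"
    by (simp add: exp_add[symmetric] field_simps)
  also have "2 * (exp (- a / 2) * exp (- c / 2)) \<le> exp (- a) + exp (- c)"
  proof -
    have "0 \<le> (exp (- a / 2) - exp (- c / 2))^2" by simp
    moreover have "exp (- a / 2)^2 = exp (- a)" "exp (- c / 2)^2 = exp (- c)"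
      by (simp_all add: exp_add[symmetric] power2_eq_square)
    ultimately show ?thesis by (simp add: power2_diff)
  qed
  finally show ?thesis .
qed

theorem proposition1:
  fixes \<eta> \<beta> :: real and n :: nat
  assumes "\<eta> > 0" and "1 < \<beta>" and "\<beta> \<le> 2" and "n \<ge> 3"
  shows "weibull1_hazard \<eta> \<beta> n - 2 * weibull1_hazard \<eta> \<beta> (n - 1)
           + weibull1_hazard \<eta> \<beta> (n - 2) \<le> 0"
proof -
  define m where "m = real n - 2"
  have m1: "1 \<le> m" using assms(4) unfolding m_def by simp
  define K where "K = \<eta> powr \<beta>"
  have K: "K > 0" unfolding K_def using assms by simp
  have pw: "(x / \<eta>) powr \<beta> = x powr \<beta> / K" if "0 \<le> x" for x
    unfolding K_def using that assms by (simp add: powr_divide)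
  define a where "a = (m powr \<beta> - (m-1) powr \<beta>) / K"
  define b where "b = ((m+1) powr \<beta> - m powr \<beta>) / K"
  define c where "c = ((m+2) powr \<beta> - (m+1) powr \<beta>) / K"
  have n1: "real (n - 1) = m + 1" "real (n-2) = m" "real n = m + 2"
    using assms(4) unfolding m_def by auto
  have h0: "weibull1_hazard \<eta> \<beta> n = 1 - exp (- c)"
    unfolding weibull1_hazard_def c_def using m1 n1
    by (simp add: pw diff_divide_distrib add.commute)
  have h1: "weibull1_hazard \<eta> \<beta> (n-1) = 1 - exp (- b)"
    unfolding weibull1_hazard_def b_def using m1 n1
    by (simp add: pw diff_divide_distrib add.commute)
  have h2: "weibull1_hazard \<eta> \<beta> (n-2) = 1 - exp (- a)"
  proof -
    have e: "real (n-2) - 1 = m - 1" using n1 by simp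
    show ?thesis unfolding weibull1_hazard_def a_def e n1(2)
      using pw[of m] pw[of "m-1"] m1 by (simp add: diff_divide_distrib)
  qed
  have "a + c \<le> 2 * b"
  proof -
    have "(m+2) powr \<beta> - 2*(m+1) powr \<beta> + m powr \<beta> \<le> (m+1) powr \<beta> - 2*m powr \<beta> + (m-1) powr \<beta>"
      using Dmono[OF assms(2,3) m1] .
    then have "((m+2) powr \<beta> - 2*(m+1) powr \<beta> + m powr \<beta>) / K \<le> ((m+1) powr \<beta> - 2*m powr \<beta> + (m-1) powr \<beta>) / K"
      using K by (intro divide_right_mono) auto
    then show ?thesis unfolding a_def b_def c_def using K by (simp add: divide_simps)
  qed
  then have "2 * exp (- b) \<le> exp (- a) + exp (- c)" by (rule expineq)
  then show ?thesis unfolding h0 h1 h2 by simp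
qed

end
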